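(* Let $\mathbf{X}=(X,\mu_X,\mathcal{S}_X)$ and $\mathbf{Y}=(Y,\mu_Y,\mathcal{S}_Y)$ be symmetry measure spaces whose measures take values in a common complete linearly ordered set. Suppose there is a function $f:X\to Y$ such that (i) for every $\mu_Y$-measurable set $B\subset Y$ the preimage $f^{-1}(B)$ is $\mu_X$-measurable and $\mu_X(f^{-1}(B))\le \mu_Y(B)$; (ii) for every $s_X\in\mathcal{S}_X$ there is $s_Y\in\mathcal{S}_Y$ with $s_Y\circ f=f\circ s_X$. Then $\mathrm{ms}_r(\mathbf{X})\le \mathrm{ms}_r(\mathbf{Y})$ for every cardinal $r$.
   Context: A measure on a set $X$ is a monotone function $\mu:\mathrm{dom}(\mu)\to[\mu(\emptyset),\mu(X)]$ defined on a $\sigma$-algebra $\mathrm{dom}(\mu)$ of subsets of $X$ (the measurable sets) with values in a complete linearly ordered set (every subset has an infimum and a supremum); monotone means $\mu(A)\le\mu(B)$ whenever $A\subset B$ are measurable. A symmetry measure space is a triple $(X,\mu,\mathcal{S})$ where $\mathcal{S}$ is a family of bijections $X\to X$ (admissible symmetries) with $s^{-1}\in\mathcal{S}$ for each $s\in\mathcal{S}$, and each $s\in\mathcal{S}$ is measure-preserving: $s(A)$ is measurable and $\mu(s(A))=\mu(A)$ for each measurable $A$. A set $A\subset X$ is $\mathcal{S}$-symmetric if $s(A)=A$ for some $s\in\mathcal{S}$. For measurable $A$, $\mathrm{ms}(A)=\sup\{\mu(B): B\subset A \text{ measurable and } \mathcal{S}\text{-symmetric}\}$. For a cardinal $r$,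 $\mathrm{ms}_r(\mathbf{X})=\inf_{\chi}\sup_{i\in r}\mathrm{ms}(\chi^{-1}(i))$, the infimum over all measurable colorings $\chi:X\to r$ (i.e. each $\chi^{-1}(i)$ is measurable). *)

theory Defs
  imports "HOL-Analysis.Analysis"
begin

definition gen_measure :: "'a set \<Rightarrow> 'a set set \<Rightarrow> ('a set \<Rightarrow> 'v::complete_linorder) \<Rightarrow> bool" where
  "gen_measure X M mu \<longleftrightarrow> sigma_algebra X M
     \<and> (\<forall>A\<in>M. \<forall>B\<in>M. A \<subseteq> B \<longrightarrow> mu A \<le> mu B)
     \<and> (\<forall>A\<in>M. mu {} \<le> mu A \<and> mu A \<le> mu X)"

definition sym_measure_space ::
  "'a set \<Rightarrow> 'a set set \<Rightarrow> ('a set \<Rightarrow> 'v::complete_linorder) \<Rightarrow> ('a \<Rightarrow> 'a) set \<Rightarrow> bool" where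
  "sym_measure_space X M mu S \<longleftrightarrow> gen_measure X M mu
     \<and> (\<forall>s\<in>S. bij_betw s X X)
     \<and> (\<forall>s\<in>S. \<exists>t\<in>S. \<forall>x\<in>X. t (s x) = x \<and> s (t x) = x)
     \<and> (\<forall>s\<in>S. \<forall>A\<in>M. s ` A \<in> M \<and> mu (s ` A) = mu A)"

definition S_symmetric :: "('a \<Rightarrow> 'a) set \<Rightarrow> 'a set \<Rightarrow> bool" where
  "S_symmetric S A \<longleftrightarrow> (\<exists>s\<in>S. s ` A = A)"

definition ms :: "'a set set \<Rightarrow> ('a set \<Rightarrow> 'v::complete_linorder) \<Rightarrow> ('a \<Rightarrow> 'a) set \<Rightarrow> 'a set \<Rightarrow> 'v" where
  "ms M mu S A = (SUP B \<in> {B. B \<subseteq> A \<and> B \<in> M \<and> S_symmetric S B}. mu B)"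

text \<open>Measurable colorings of X by the colour set R (a cardinal r is represented by an
  arbitrary set R of colours).\<close>
definition measurable_colorings :: "'a set \<Rightarrow> 'a set set \<Rightarrow> 'c set \<Rightarrow> ('a \<Rightarrow> 'c) set" where
  "measurable_colorings X M R = {col. col \<in> X \<rightarrow> R \<and> (\<forall>i\<in>R. {x\<in>X. col x = i} \<in> M)}"

definition ms_r :: "'a set \<Rightarrow> 'a set set \<Rightarrow> ('a set \<Rightarrow> 'v::complete_linorder) \<Rightarrow> ('a \<Rightarrow> 'a) set \<Rightarrow> 'c set \<Rightarrow> 'v" where
  "ms_r X M mu S R = (INF col \<in> measurable_colorings X M R. SUP i \<in> R. ms M mu S {x\<in>X. col x = i})"

end

theory Submission
  imports Defs
begin

lemma img_iter:
  assumes st: "\<forall>y\<in>Y. s y \<in> Y \<and> t y \<in> Y \<and> t (s y) = y \<and> s (t y) = y" and C: "C \<subseteq> Y"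
  shows "y \<in> Y \<Longrightarrow> (y \<in> (t^^n)`C) \<longleftrightarrow> ((s^^n) y \<in> C)"
proof (induction n arbitrary: y)
  case 0 then show ?case by simp
next
  case (Suc n)
  have tY: "(t^^n)`C \<subseteq> Y"
  proof (induction n)
    case 0 then show ?case using C by simp
  next
    case (Suc n) then show ?case using st by (auto simp: image_comp[symmetric])
  qed
  have "y \<in> (t^^Suc n)`C \<longleftrightarrow> y \<in> t ` ((t^^n)`C)" by (simp add: image_comp)
  also have "\<dots> \<longleftrightarrow> s y \<in> (t^^n)`C"
  proof
    assume "y \<in> t ` ((t^^n)`C)"
    then obtain a where "a \<in> (t^^n)`C" "y = t a" by blast
    then show "s y \<in> (t^^n)`C" using st tY by auto
  next
    assume "s y \<in> (t^^n)`C"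
    moreover have "y = t (s y)" using st Suc.prems by auto
    ultimately show "y \<in> t ` ((t^^n)`C)" by blast
  qed
  also have "\<dots> \<longleftrightarrow> (s^^n) (s y) \<in> C" using Suc.IH[of "s y"] st Suc.prems by auto
  also have "\<dots> \<longleftrightarrow> (s^^Suc n) y \<in> C" by (simp add: funpow_Suc_right del: funpow.simps)
  finally show ?case .
qed

lemma orbit_core:
  assumes st: "\<forall>y\<in>Y. s y \<in> Y \<and> t y \<in> Y \<and> t (s y) = y \<and> s (t y) = y" and C: "C \<subseteq> Y"
  defines "D \<equiv> {y\<in>Y. \<forall>n. (s^^n) y \<in> C \<and> (t^^n) y \<in> C}"
  shows "s ` D = D" "D \<subseteq> C" "D = (\<Inter>n. (t^^n)`C \<inter> (s^^n)`C)"
proof -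
  have st': "\<forall>y\<in>Y. t y \<in> Y \<and> s y \<in> Y \<and> s (t y) = y \<and> t (s y) = y" using st by auto
  have sD: "s y \<in> D" if "y \<in> D" for y
  proof -
    have y: "y \<in> Y" "\<And>n. (s^^n) y \<in> C" "\<And>n. (t^^n) y \<in> C" using that D_def by auto
    have "(s^^n) (s y) \<in> C" for n using y(2)[of "Suc n"] by (simp add: funpow_Suc_right del: funpow.simps)
    moreover have "(t^^n) (s y) \<in> C" for n
    proof (cases n)
      case 0 then show ?thesis using y(2)[of 1] by simp
    next
      case (Suc m)
      have "(t^^n) (s y) = (t^^m) (t (s y))" using Suc by (simp add: funpow_Suc_right del: funpow.simps)
      then show ?thesis using y st by simp
    qed
    ultimately show ?thesis using st y D_def by auto
  qed
  have tD: "t y \<in> D" if "y \<in> D" for y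
  proof -
    have y: "y \<in> Y" "\<And>n. (s^^n) y \<in> C" "\<And>n. (t^^n) y \<in> C" using that D_def by auto
    have "(t^^n) (t y) \<in> C" for n using y(3)[of "Suc n"] by (simp add: funpow_Suc_right del: funpow.simps)
    moreover have "(s^^n) (t y) \<in> C" for n
    proof (cases n)
      case 0 then show ?thesis using y(3)[of 1] by simp
    next
      case (Suc m)
      have "(s^^n) (t y) = (s^^m) (s (t y))" using Suc by (simp add: funpow_Suc_right del: funpow.simps)
      then show ?thesis using y st by simp
    qed
    ultimately show ?thesis using st y D_def by auto
  qed
  show "s ` D = D"
  proof
    show "s ` D \<subseteq> D" using sD by auto
    show "D \<subseteq> s ` D"
    proof
      fix y assume "y \<in> D"
      then have "y = s (t y)" "t y \<in> D" using st D_def tD by auto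
      then show "y \<in> s ` D" by blast
    qed
  qed
  show "D \<subseteq> C"
  proof
    fix y assume "y \<in> D"
    then have "(s^^0) y \<in> C" unfolding D_def by blast
    then show "y \<in> C" by simp
  qed
  show "D = (\<Inter>n. (t^^n)`C \<inter> (s^^n)`C)"
  proof
    show "D \<subseteq> (\<Inter>n. (t^^n)`C \<inter> (s^^n)`C)"
    proof
      fix y assume "y \<in> D"
      then have y: "y \<in> Y" "\<And>n. (s^^n) y \<in> C" "\<And>n. (t^^n) y \<in> C" unfolding D_def by auto
      have "y \<in> (t^^n)`C \<inter> (s^^n)`C" for n
        using img_iter[OF st C y(1), of n] img_iter[OF st' C y(1), of n] y(2,3) by blast
      then show "y \<in> (\<Inter>n. (t^^n)`C \<inter> (s^^n)`C)" by blast
    qed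
  next
    show "(\<Inter>n. (t^^n)`C \<inter> (s^^n)`C) \<subseteq> D"
    proof
      fix y assume y: "y \<in> (\<Inter>n. (t^^n)`C \<inter> (s^^n)`C)"
      then have "y \<in> (t^^0)`C" by blast
      then have "y \<in> C" by simp
      then have yY: "y \<in> Y" using C by auto
      have "(s^^n) y \<in> C \<and> (t^^n) y \<in> C" for n
        using img_iter[OF st C yY, of n] img_iter[OF st' C yY, of n] y by blast
      then show "y \<in> D" using yY unfolding D_def by blast
    qed
  qed
qed

lemma iter_meas:
  assumes "\<And>A. A \<in> M \<Longrightarrow> s ` A \<in> M" "C \<in> M"
  shows "(s^^n) ` C \<in> M"
proof (induction n)
  case 0 then show ?case using assms by simp
next
  case (Suc n)
  have "(s^^Suc n) ` C = s ` ((s^^n) ` C)" by (simp add: image_comp)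
  then show ?case using Suc assms by simp
qed


lemma key:
  fixes X :: "'a set" and MX :: "'a set set" and muX :: "'a set \<Rightarrow> 'v::complete_linorder"
    and SX :: "('a \<Rightarrow> 'a) set"
    and Y :: "'b set" and MY :: "'b set set" and muY :: "'b set \<Rightarrow> 'v"
    and SY :: "('b \<Rightarrow> 'b) set"
    and f :: "'a \<Rightarrow> 'b"
  assumes hX: "sym_measure_space X MX muX SX"
    and hY: "sym_measure_space Y MY muY SY"
    and fXY: "f \<in> X \<rightarrow> Y"
    and h4: "\<forall>B\<in>MY. f -` B \<inter> X \<in> MX \<and> muX (f -` B \<inter> X) \<le> muY B"
    and h5: "\<forall>sX\<in>SX. \<exists>sY\<in>SY. \<forall>x\<in>X. sY (f x) = f (sX x)"
    and CM: "C \<in> MY"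
  shows "ms MX muX SX (f -` C \<inter> X) \<le> ms MY muY SY C"
  unfolding ms_def
proof (rule SUP_least)
  fix B assume "B \<in> {B. B \<subseteq> f -` C \<inter> X \<and> B \<in> MX \<and> S_symmetric SX B}"
  then have BC: "B \<subseteq> f -` C \<inter> X" and BM: "B \<in> MX" and "S_symmetric SX B" by auto
  then obtain sX where sX: "sX \<in> SX" "sX ` B = B" unfolding S_symmetric_def by blast
  obtain sY where sY: "sY \<in> SY" "\<forall>x\<in>X. sY (f x) = f (sX x)" using h5 sX by blast
  obtain t where t: "t \<in> SY" "\<forall>y\<in>Y. t (sY y) = y \<and> sY (t y) = y"
    using hY sY unfolding sym_measure_space_def by blast
  have sigY: "sigma_algebra Y MY" and sigX: "sigma_algebra X MX"
    using hY hX unfolding sym_measure_space_def gen_measure_def by auto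
  have monoX: "\<forall>A\<in>MX. \<forall>B\<in>MX. A \<subseteq> B \<longrightarrow> muX A \<le> muX B"
    using hX unfolding sym_measure_space_def gen_measure_def by auto
  have bijs: "bij_betw sY Y Y" "bij_betw t Y Y" using hY sY t unfolding sym_measure_space_def by auto
  have st: "\<forall>y\<in>Y. sY y \<in> Y \<and> t y \<in> Y \<and> t (sY y) = y \<and> sY (t y) = y"
    using t bij_betw_apply[OF bijs(1)] bij_betw_apply[OF bijs(2)] by auto
  have CY: "C \<subseteq> Y" using sigY CM unfolding sigma_algebra_iff2 by blast
  have BX: "B \<subseteq> X" using BC by auto
  define D where "D \<equiv> {y\<in>Y. \<forall>n. (sY^^n) y \<in> C \<and> (t^^n) y \<in> C}"
  note oc = orbit_core[OF st CY, folded D_def]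
  have imM: "\<And>A. A \<in> MY \<Longrightarrow> sY ` A \<in> MY" "\<And>A. A \<in> MY \<Longrightarrow> t ` A \<in> MY"
    using hY sY t unfolding sym_measure_space_def by auto
  have DM: "D \<in> MY"
  proof -
    interpret sA: sigma_algebra Y MY by (rule sigY)
    have "(\<Inter>n. (t^^n)`C \<inter> (sY^^n)`C) \<in> MY"
      apply (rule sA.countable_INT')
      using iter_meas[OF imM(1) CM] iter_meas[OF imM(2) CM] by auto
    then show ?thesis using oc(3) by simp
  qed
  have DS: "S_symmetric SY D" unfolding S_symmetric_def using sY(1) oc(1) by blast
  have fB: "f x' \<in> Y" if "x' \<in> B" for x' using fXY BX that by auto
  have itS: "\<forall>x\<in>B. \<exists>x'\<in>B. (sY^^n) (f x) = f x'" for n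
  proof (induction n)
    case 0 then show ?case by auto
  next
    case (Suc n)
    show ?case
    proof
      fix x assume "x \<in> B"
      then obtain x' where "x' \<in> B" "(sY^^n) (f x) = f x'" using Suc by blast
      then have "(sY^^Suc n) (f x) = f (sX x')" "sX x' \<in> B" using sY BX sX by auto
      then show "\<exists>x'\<in>B. (sY^^Suc n) (f x) = f x'" by blast
    qed
  qed
  have itT: "\<forall>x\<in>B. \<exists>x'\<in>B. (t^^n) (f x) = f x'" for n
  proof (induction n)
    case 0 then show ?case by auto
  next
    case (Suc n)
    show ?case
    proof
      fix x assume "x \<in> B"
      then obtain x' where x': "x' \<in> B" "(t^^n) (f x) = f x'" using Suc by blast
      then obtain x'' where x'': "x'' \<in> B" "x' = sX x''" using sX(2) by blast
      then have "f x' = sY (f x'')" using sY BX by auto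
      then have "t (f x') = f x''" using st fB x'' by auto
      then have "(t^^Suc n) (f x) = f x''" using x' by simp
      then show "\<exists>x'\<in>B. (t^^Suc n) (f x) = f x'" using x'' by blast
    qed
  qed
  have BD: "B \<subseteq> f -` D \<inter> X"
  proof
    fix x assume x: "x \<in> B"
    have "(sY^^n) (f x) \<in> C \<and> (t^^n) (f x) \<in> C" for n
      using itS[of n] itT[of n] x BC by fastforce
    then show "x \<in> f -` D \<inter> X" using x fB BX unfolding D_def by auto
  qed
  have "muX B \<le> muX (f -` D \<inter> X)" using monoX BM h4 DM BD by blast
  also have "\<dots> \<le> muY D" using h4 DM by blast
  also have "\<dots> \<le> (SUP B \<in> {B. B \<subseteq> C \<and> B \<in> MY \<and> S_symmetric SY B}. muY B)"
    by (rule SUP_upper) (use oc(2) DM DS in auto)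
  finally show "muX B \<le> (SUP B \<in> {B. B \<subseteq> C \<and> B \<in> MY \<and> S_symmetric SY B}. muY B)" .
qed

theorem proposition3p1:
  fixes X :: "'a set" and MX :: "'a set set" and muX :: "'a set \<Rightarrow> 'v::complete_linorder"
    and SX :: "('a \<Rightarrow> 'a) set"
    and Y :: "'b set" and MY :: "'b set set" and muY :: "'b set \<Rightarrow> 'v"
    and SY :: "('b \<Rightarrow> 'b) set"
    and f :: "'a \<Rightarrow> 'b" and R :: "'c set"
  assumes "sym_measure_space X MX muX SX"
    and "sym_measure_space Y MY muY SY"
    and "f \<in> X \<rightarrow> Y"
    and "\<forall>B\<in>MY. f -` B \<inter> X \<in> MX \<and> muX (f -` B \<inter> X) \<le> muY B"
    and "\<forall>sX\<in>SX. \<exists>sY\<in>SY. \<forall>x\<in>X. sY (f x) = f (sX x)"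
  shows "ms_r X MX muX SX R \<le> ms_r Y MY muY SY R"
  unfolding ms_r_def
proof (rule INF_greatest)
  fix col assume col: "col \<in> measurable_colorings Y MY R"
  have pre: "{x\<in>X. (col \<circ> f) x = i} = f -` {y\<in>Y. col y = i} \<inter> X" for i
    using assms(3) by auto
  have cm: "col \<circ> f \<in> measurable_colorings X MX R"
  proof -
    have "\<forall>i\<in>R. {x\<in>X. (col \<circ> f) x = i} \<in> MX"
    proof
      fix i assume "i \<in> R"
      then have "{y\<in>Y. col y = i} \<in> MY" using col unfolding measurable_colorings_def by auto
      then show "{x\<in>X. (col \<circ> f) x = i} \<in> MX" unfolding pre using assms(4) by blast
    qed
    moreover have "col \<circ> f \<in> X \<rightarrow> R" using col assms(3) unfolding measurable_colorings_def by auto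
    ultimately show ?thesis unfolding measurable_colorings_def by auto
  qed
  have "(INF col \<in> measurable_colorings X MX R. SUP i \<in> R. ms MX muX SX {x\<in>X. col x = i})
      \<le> (SUP i \<in> R. ms MX muX SX {x\<in>X. (col \<circ> f) x = i})"
    by (rule INF_lower[OF cm])
  also have "\<dots> \<le> (SUP i \<in> R. ms MY muY SY {y\<in>Y. col y = i})"
  proof (rule SUP_mono)
    fix i assume i: "i \<in> R"
    have "{y\<in>Y. col y = i} \<in> MY" using col i unfolding measurable_colorings_def by auto
    then show "\<exists>j\<in>R. ms MX muX SX {x\<in>X. (col \<circ> f) x = i} \<le> ms MY muY SY {y\<in>Y. col y = j}"
      using key[OF assms] i unfolding pre by blast
  qed
  finally show "(INF col \<in> measurable_colorings X MX R. SUP i \<in> R. ms MX muX SX {x\<in>X. col x = i})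
      \<le> (SUP i \<in> R. ms MY muY SY {y\<in>Y. col y = i})" .
qed

end
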